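(* Let $n\ge2$, $\psi\in\mathrm{Aut}(F_n)$, and let $X\to R_n$ be a finite regular cover corresponding to a characteristic finite-index subgroup $K=\pi_1(X)\le F_n$, with deck group $\Gamma=F_n/K$. Then the automorphism of $\Gamma$ induced by $\psi$ is the identity if and only if the automorphism of $H_1(X,\mathbb{Z})$ induced by $\psi$ is $\Gamma$-equivariant, i.e. $\psi(w\cdot d)=w\cdot\psi(d)$ for all $w\in F_n$ (equivalently all $w\in\Gamma$) and $d\in H_1(X,\mathbb{Z})$.
   Context: $F_n$ is the free group of rank $n\ge2$, identified with $\pi_1(R_n,* )$, $R_n$ the wedge of $n$ circles. $K$ characteristic means $\psi(K)=K$ for all $\psi\in\mathrm{Aut}(F_n)$. $H_1(X,\mathbb{Z})\cong K^{ab}=K/[K,K]$; the action $w\cdot d$ of $w\in F_n$ on $d\in K^{ab}$ is induced by conjugation $\gamma\mapsto w\gamma w^{-1}$ on $K$ and factors through $\Gamma$. The automorphism of $H_1(X,\mathbb{Z})$ induced by $\psi$ is the abelianization of $\psi|_K$. *)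

theory Defs
  imports "HOL-Algebra.Algebra"
begin

text \<open>A letter (b, i) stands for the generator x_i if b = True and for its inverse if b = False.\<close>

type_synonym fg_word = "(bool \<times> nat) list"

fun fg_push :: "bool \<times> nat \<Rightarrow> fg_word \<Rightarrow> fg_word" where
  "fg_push x [] = [x]"
| "fg_push x (y # ys) = (if snd x = snd y \<and> fst x \<noteq> fst y then ys else x # y # ys)"

definition fg_reduce :: "fg_word \<Rightarrow> fg_word" where
  "fg_reduce ws = foldr fg_push ws []"

definition fg_inv :: "fg_word \<Rightarrow> fg_word" where
  "fg_inv ws = rev (map (\<lambda>(b, i). (\<not> b, i)) ws)"

definition free_group :: "nat \<Rightarrow> fg_word monoid" where
  "free_group n = \<lparr> carrier = {ws. fg_reduce ws = ws \<and> (\<forall>x\<in>set ws. snd x < n)},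
                    monoid.mult = (\<lambda>u v. fg_reduce (u @ v)),
                    one = [] \<rparr>"

definition characteristic :: "('a, 'b) monoid_scheme \<Rightarrow> 'a set \<Rightarrow> bool" where
  "characteristic G K \<longleftrightarrow> subgroup K G \<and> (\<forall>\<phi>\<in>auto G. \<phi> ` K = K)"

section \<open>Deck group Gamma = G/K and the first homology K^ab = K/[K,K] of the cover\<close>

definition deck_group_induced_is_id :: "('a, 'b) monoid_scheme \<Rightarrow> 'a set \<Rightarrow> ('a \<Rightarrow> 'a) \<Rightarrow> bool" where
  "deck_group_induced_is_id G K \<psi> \<longleftrightarrow> (\<forall>C\<in>carrier (G Mod K). \<psi> ` C = C)"

definition abelianization_carrier :: "('a, 'b) monoid_scheme \<Rightarrow> 'a set \<Rightarrow> 'a set set" where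
  "abelianization_carrier G K = carrier ((G\<lparr>carrier := K\<rparr>) Mod (derived G K))"

definition conj_action :: "('a, 'b) monoid_scheme \<Rightarrow> 'a \<Rightarrow> 'a set \<Rightarrow> 'a set" where
  "conj_action G w D = (\<lambda>\<gamma>. w \<otimes>\<^bsub>G\<^esub> \<gamma> \<otimes>\<^bsub>G\<^esub> inv\<^bsub>G\<^esub> w) ` D"

definition homology_induced :: "('a \<Rightarrow> 'a) \<Rightarrow> 'a set \<Rightarrow> 'a set" where
  "homology_induced \<psi> D = \<psi> ` D"

definition homology_equivariant :: "('a, 'b) monoid_scheme \<Rightarrow> 'a set \<Rightarrow> ('a \<Rightarrow> 'a) \<Rightarrow> bool" where
  "homology_equivariant G K \<psi> \<longleftrightarrow>
     (\<forall>w\<in>carrier G. \<forall>D\<in>abelianization_carrier G K.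
        homology_induced \<psi> (conj_action G w D) = conj_action G w (homology_induced \<psi> D))"

end

theory Submission
  imports Defs
begin


definition linv :: "bool \<times> nat \<Rightarrow> bool \<times> nat" where
  "linv x = (\<not> fst x, snd x)"

fun reduced :: "fg_word \<Rightarrow> bool" where
  "reduced [] = True"
| "reduced [x] = True"
| "reduced (x # y # ys) = (\<not> (snd x = snd y \<and> fst x \<noteq> fst y) \<and> reduced (y # ys))"

lemma reduced_tl: "reduced (x # ys) \<Longrightarrow> reduced ys"
  by (cases ys) auto

lemma reduced_push: "reduced ws \<Longrightarrow> reduced (fg_push x ws)"
proof (cases ws)
  case Nil then show ?thesis by simp
next
  case (Cons y ys)
  assume r: "reduced ws"
  then show ?thesis using Cons reduced_tl[of y ys] by auto
qed

lemma reduced_fg_reduce: "reduced (fg_reduce ws)"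
  unfolding fg_reduce_def by (induction ws) (auto intro: reduced_push)

lemma fg_reduce_Cons: "fg_reduce (x # ws) = fg_push x (fg_reduce ws)"
  unfolding fg_reduce_def by simp

lemma fg_reduce_reduced: "reduced ws \<Longrightarrow> fg_reduce ws = ws"
proof (induction ws)
  case Nil then show ?case by (simp add: fg_reduce_def)
next
  case (Cons x ws)
  then have "fg_reduce ws = ws" using reduced_tl by blast
  then show ?case using Cons.prems by (cases ws) (auto simp: fg_reduce_Cons)
qed

lemma fg_reduce_eq_iff: "fg_reduce ws = ws \<longleftrightarrow> reduced ws"
  using fg_reduce_reduced reduced_fg_reduce by metis

lemma push_linv: "reduced s \<Longrightarrow> fg_push (linv y) (fg_push y s) = s"
proof (cases s)
  case Nil then show ?thesis by (simp add: linv_def)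
next
  case (Cons z zs)
  assume r: "reduced s"
  show ?thesis
  proof (cases "snd y = snd z \<and> fst y \<noteq> fst z")
    case True
    then have "fg_push y s = zs" using Cons by simp
    moreover have "fg_push (linv y) zs = z # zs"
      using r Cons True by (cases zs) (auto simp: linv_def)
    ultimately show ?thesis using Cons by simp
  next
    case False
    then show ?thesis using Cons by (auto simp: linv_def)
  qed
qed

lemma linv_linv[simp]: "linv (linv x) = x" by (simp add: linv_def)

lemma push_linv': "reduced s \<Longrightarrow> fg_push y (fg_push (linv y) s) = s"
  using push_linv[of s "linv y"] by simp

lemma reduced_foldr: "reduced w \<Longrightarrow> reduced (foldr fg_push u w)"
  by (induction u) (auto intro: reduced_push)

lemma foldr_push_push:
  assumes "reduced w"
  shows "foldr fg_push (fg_push x r) w = fg_push x (foldr fg_push r w)"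
proof (cases r)
  case Nil then show ?thesis by simp
next
  case (Cons y r')
  show ?thesis
  proof (cases "snd x = snd y \<and> fst x \<noteq> fst y")
    case True
    then have y: "y = linv x" by (cases x, cases y) (auto simp: linv_def)
    have "fg_push x (foldr fg_push r w) = fg_push x (fg_push (linv x) (foldr fg_push r' w))"
      using Cons y by simp
    also have "\<dots> = foldr fg_push r' w" using push_linv' reduced_foldr[OF assms] by blast
    finally show ?thesis using Cons True by simp
  next
    case False then show ?thesis using Cons by auto
  qed
qed

lemma foldr_reduce: "reduced w \<Longrightarrow> foldr fg_push (fg_reduce u) w = foldr fg_push u w"
proof (induction u)
  case Nil then show ?case by (simp add: fg_reduce_def)
next
  case (Cons x u)
  then show ?case by (simp add: fg_reduce_Cons foldr_push_push)
qed

lemma fg_reduce_append: "fg_reduce (u @ v) = foldr fg_push u (fg_reduce v)"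
  unfolding fg_reduce_def by simp

lemma fg_reduce_append_left: "fg_reduce (fg_reduce u @ v) = fg_reduce (u @ v)"
  by (simp add: fg_reduce_append foldr_reduce reduced_fg_reduce)

lemma fg_reduce_append_right: "fg_reduce (u @ fg_reduce v) = fg_reduce (u @ v)"
  by (simp add: fg_reduce_append fg_reduce_reduced reduced_fg_reduce)

lemma set_push: "set (fg_push x ws) \<subseteq> insert x (set ws)"
  by (cases ws) auto

lemma set_fg_reduce: "set (fg_reduce ws) \<subseteq> set ws"
proof (induction ws)
  case Nil then show ?case by (simp add: fg_reduce_def)
next
  case (Cons x ws) then show ?case using set_push[of x "fg_reduce ws"] by (auto simp: fg_reduce_Cons)
qed

lemma foldr_inv: "reduced s \<Longrightarrow> foldr fg_push (fg_inv u) (foldr fg_push u s) = s"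
proof (induction u)
  case Nil then show ?case by (simp add: fg_inv_def)
next
  case (Cons x u)
  have "fg_inv (x # u) = fg_inv u @ [linv x]"
    by (simp add: fg_inv_def linv_def case_prod_beta)
  then show ?case using Cons push_linv reduced_foldr by simp
qed

lemma carrier_fg: "carrier (free_group n) = {ws. reduced ws \<and> (\<forall>x\<in>set ws. snd x < n)}"
  by (simp add: free_group_def fg_reduce_eq_iff)

lemma mult_fg: "u \<otimes>\<^bsub>free_group n\<^esub> v = fg_reduce (u @ v)"
  by (simp add: free_group_def)

lemma one_fg: "\<one>\<^bsub>free_group n\<^esub> = []"
  by (simp add: free_group_def)

lemma group_fg: "group (free_group n)"
proof (rule groupI)
  fix x y assume "x \<in> carrier (free_group n)" "y \<in> carrier (free_group n)"
  then show "x \<otimes>\<^bsub>free_group n\<^esub> y \<in> carrier (free_group n)"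
    using set_fg_reduce[of "x @ y"] by (auto simp: carrier_fg mult_fg reduced_fg_reduce)
next
  show "\<one>\<^bsub>free_group n\<^esub> \<in> carrier (free_group n)" by (simp add: carrier_fg one_fg)
next
  fix x y z assume "x \<in> carrier (free_group n)" "y \<in> carrier (free_group n)" "z \<in> carrier (free_group n)"
  show "x \<otimes>\<^bsub>free_group n\<^esub> y \<otimes>\<^bsub>free_group n\<^esub> z = x \<otimes>\<^bsub>free_group n\<^esub> (y \<otimes>\<^bsub>free_group n\<^esub> z)"
    by (simp add: mult_fg fg_reduce_append_left fg_reduce_append_right)
next
  fix x assume "x \<in> carrier (free_group n)"
  then show "\<one>\<^bsub>free_group n\<^esub> \<otimes>\<^bsub>free_group n\<^esub> x = x"
    by (simp add: carrier_fg mult_fg one_fg fg_reduce_reduced)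
next
  fix x assume x: "x \<in> carrier (free_group n)"
  have "\<forall>y\<in>set (fg_inv x). snd y < n" using x by (force simp: carrier_fg fg_inv_def)
  then have "fg_reduce (fg_inv x) \<in> carrier (free_group n)"
    using set_fg_reduce[of "fg_inv x"] by (auto simp: carrier_fg reduced_fg_reduce)
  moreover have "fg_reduce (fg_inv x) \<otimes>\<^bsub>free_group n\<^esub> x = []"
  proof -
    have "fg_reduce (fg_inv x) \<otimes>\<^bsub>free_group n\<^esub> x = fg_reduce (fg_inv x @ x)"
      by (simp add: mult_fg fg_reduce_append_left)
    also have "\<dots> = []" using foldr_inv[of "[]" x] by (simp add: fg_reduce_append, simp add: fg_reduce_def)
    finally show ?thesis .
  qed
  ultimately show "\<exists>y\<in>carrier (free_group n). y \<otimes>\<^bsub>free_group n\<^esub> x = \<one>\<^bsub>free_group n\<^esub>"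
    by (auto simp: one_fg)
qed




fun phi :: "fg_word set \<Rightarrow> nat \<Rightarrow> fg_word \<Rightarrow> fg_word \<Rightarrow> int" where
  "phi K i [] y = 0"
| "phi K i (x # ws) y =
     (if snd x = i then (if fst x then (if y \<in> K then 1 else 0)
                         else (if fg_reduce (y @ [linv x]) \<in> K then -1 else 0)) else 0)
     + phi K i ws (fg_reduce (linv x # y))"

definition letters_ok :: "nat \<Rightarrow> fg_word \<Rightarrow> bool" where
  "letters_ok n ws \<longleftrightarrow> (\<forall>x\<in>set ws. snd x < n)"

locale fgK = normal K G for K :: "fg_word set" and G :: "fg_word monoid" (structure) + fixes n assumes G_def: "G = free_group n"
begin

lemma carrier_G: "carrier G = {ws. reduced ws \<and> letters_ok n ws}"
  by (simp add: G_def carrier_fg letters_ok_def)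

lemma mult_G: "u \<otimes> v = fg_reduce (u @ v)"
  by (simp add: G_def mult_fg)

lemma one_G: "\<one> = []"
  by (simp add: G_def one_fg)

lemma letter_carrier: "snd x < n \<Longrightarrow> [x] \<in> carrier G"
  by (simp add: carrier_G letters_ok_def)

lemma linv_lt: "snd (linv x) = snd x" by (simp add: linv_def)

lemma inv_letter: "snd x < n \<Longrightarrow> inv [x] = [linv x]"
proof (rule inv_equality)
  assume "snd x < n"
  show "[linv x] \<otimes> [x] = \<one>" by (simp add: mult_G one_G fg_reduce_def linv_def)
  show "[x] \<in> carrier G" by (simp add: \<open>snd x < n\<close> letter_carrier)
  show "[linv x] \<in> carrier G" by (simp add: \<open>snd x < n\<close> letter_carrier linv_lt)
qed

lemma reduce_cons: "fg_reduce (a # y) = [a] \<otimes> y"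
  by (simp add: mult_G)

lemma reduce_snoc: "fg_reduce (y @ [a]) = y \<otimes> [a]"
  by (simp add: mult_G)

lemma cancel1: "a \<in> carrier G \<Longrightarrow> b \<in> carrier G \<Longrightarrow> inv a \<otimes> (a \<otimes> b) = b"
  by (simp add: m_assoc[symmetric])

lemma cancel2: "a \<in> carrier G \<Longrightarrow> b \<in> carrier G \<Longrightarrow> a \<otimes> (inv a \<otimes> b) = b"
  by (simp add: m_assoc[symmetric])

lemma comm_iff: "a \<in> carrier G \<Longrightarrow> b \<in> carrier G \<Longrightarrow> a \<otimes> b \<in> K \<longleftrightarrow> b \<otimes> a \<in> K"
proof -
  have *: "b \<otimes> a \<in> K" if "a \<in> carrier G" "b \<in> carrier G" "a \<otimes> b \<in> K" for a b
  proof -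
    have "inv a \<otimes> (a \<otimes> b) \<otimes> a \<in> K" using inv_op_closed1 that by blast
    also have "inv a \<otimes> (a \<otimes> b) \<otimes> a = b \<otimes> a" using that by (simp add: m_assoc[symmetric])
    finally show ?thesis .
  qed
  assume "a \<in> carrier G" "b \<in> carrier G" then show ?thesis using * by blast
qed

lemma phi_Cons: "phi K i (x # ws) y =
     (if snd x = i then (if fst x then (if y \<in> K then 1 else 0)
                         else (if y \<otimes> [linv x] \<in> K then -1 else 0)) else 0)
     + phi K i ws ([linv x] \<otimes> y)"
  by (simp add: reduce_cons reduce_snoc)

lemmas phi_simps = phi.simps(1) phi_Cons

declare phi.simps(2)[simp del]

lemma phi_push:
  assumes "reduced ws" "letters_ok n ws" "snd x < n" "y \<in> carrier G"
  shows "phi K i (fg_push x ws) y = phi K i (x # ws) y"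
proof (cases ws)
  case Nil then show ?thesis by simp
next
  case (Cons z zs)
  show ?thesis
  proof (cases "snd x = snd z \<and> fst x \<noteq> fst z")
    case False then show ?thesis using Cons by auto
  next
    case True
    then have z: "z = linv x" by (cases x, cases z) (auto simp: linv_def)
    have xc: "[x] \<in> carrier G" "[linv x] \<in> carrier G" using assms(3) letter_carrier linv_lt by auto
    have "[x] \<otimes> [linv x] = \<one>" by (metis inv_letter r_inv xc(1) assms(3))
    then have "[linv z] \<otimes> ([linv x] \<otimes> y) = y"
      using xc assms(3,4) by (simp add: z m_assoc[symmetric])
    then have rest: "phi K i (x # ws) y = (if snd x = i then (if fst x then (if y \<in> K then 1 else 0)
                         else (if y \<otimes> [linv x] \<in> K then -1 else 0)) else 0)
      + (if snd z = i then (if fst z then (if [linv x] \<otimes> y \<in> K then 1 else 0)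
                         else (if [linv x] \<otimes> y \<otimes> [linv z] \<in> K then -1 else 0)) else 0)
      + phi K i zs y"
      using Cons by (simp add: phi_Cons)
    have c1: "[linv x] \<otimes> y \<otimes> [x] \<in> K \<longleftrightarrow> y \<in> K"
    proof -
      have "[linv x] \<otimes> y \<otimes> [x] \<in> K \<longleftrightarrow> [x] \<otimes> ([linv x] \<otimes> y) \<in> K"
        using comm_iff[of "[linv x] \<otimes> y" "[x]"] xc assms(4) by simp
      also have "[x] \<otimes> ([linv x] \<otimes> y) = y"
        using xc assms(3,4) inv_letter[of x] cancel2[of "[x]" y] by simp
      finally show ?thesis .
    qed
    have c2: "y \<otimes> [linv x] \<in> K \<longleftrightarrow> [linv x] \<otimes> y \<in> K"
      using comm_iff xc assms(4) by blast
    have push: "fg_push x ws = zs" using Cons True by simp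
    have sz: "snd z = snd x" "fst z = (\<not> fst x)" "linv z = x" using z by (auto simp: linv_def)
    show ?thesis
    proof (cases "snd x = i")
      case False then show ?thesis using rest sz push by simp
    next
      case si: True
      show ?thesis
      proof (cases "fst x")
        case True
        then have "phi K i (x # ws) y = (if y \<in> K then 1 else 0) + (if y \<in> K then -1 else 0) + phi K i zs y"
          using rest sz si c1 by simp
        then show ?thesis using push by simp
      next
        case False
        then have "phi K i (x # ws) y = (if [linv x] \<otimes> y \<in> K then -1 else 0) + (if [linv x] \<otimes> y \<in> K then 1 else 0) + phi K i zs y"
          using rest sz si c2 by simp
        then show ?thesis using push by simp
      qed
    qed
  qed
qed

lemma letters_ok_Cons: "letters_ok n (x # ws) \<longleftrightarrow> snd x < n \<and> letters_ok n ws"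
  by (simp add: letters_ok_def)

lemma letters_ok_reduce: "letters_ok n ws \<Longrightarrow> letters_ok n (fg_reduce ws)"
  using set_fg_reduce unfolding letters_ok_def by blast

lemma reduce_carrier: "letters_ok n ws \<Longrightarrow> fg_reduce ws \<in> carrier G"
  by (simp add: carrier_G reduced_fg_reduce letters_ok_reduce)

lemma phi_reduce:
  assumes "letters_ok n ws" "y \<in> carrier G"
  shows "phi K i (fg_reduce ws) y = phi K i ws y"
  using assms
proof (induction ws arbitrary: y)
  case Nil then show ?case by (simp add: fg_reduce_def)
next
  case (Cons x ws)
  have x: "snd x < n" "letters_ok n ws" using Cons.prems by (auto simp: letters_ok_Cons)
  have lc: "[linv x] \<in> carrier G" using x letter_carrier linv_lt by auto
  have "phi K i (fg_reduce (x # ws)) y = phi K i (fg_push x (fg_reduce ws)) y"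
    by (simp add: fg_reduce_Cons)
  also have "\<dots> = phi K i (x # fg_reduce ws) y"
    using phi_push reduced_fg_reduce letters_ok_reduce x Cons.prems by blast
  also have "\<dots> = phi K i (x # ws) y"
    using Cons.IH[OF x(2)] lc Cons.prems by (simp add: phi_Cons)
  finally show ?case .
qed

lemma phi_append:
  assumes "letters_ok n u" "letters_ok n v" "y \<in> carrier G"
  shows "phi K i (u @ v) y = phi K i u y + phi K i v (inv (fg_reduce u) \<otimes> y)"
  using assms
proof (induction u arbitrary: y)
  case Nil
  have "fg_reduce [] = \<one>" by (simp add: fg_reduce_def one_G)
  then show ?case using Nil.prems by simp
next
  case (Cons x u)
  have x: "snd x < n" "letters_ok n u" using Cons.prems by (auto simp: letters_ok_Cons)
  have lc: "[linv x] \<in> carrier G" "[x] \<in> carrier G" using x letter_carrier linv_lt by auto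
  have ru: "fg_reduce u \<in> carrier G" using reduce_carrier x by blast
  have red: "fg_reduce (x # u) = [x] \<otimes> fg_reduce u"
    using fg_reduce_append_right[of "[x]" u] by (simp add: mult_G)
  have "inv (fg_reduce (x # u)) \<otimes> y = inv (fg_reduce u) \<otimes> ([linv x] \<otimes> y)"
    using red lc ru Cons.prems inv_letter[OF x(1)] by (simp add: inv_mult_group m_assoc)
  then show ?case using Cons.IH[OF x(2) Cons.prems(2)] lc Cons.prems by (simp add: phi_Cons)
qed

lemma phi_mult:
  assumes "u \<in> carrier G" "v \<in> carrier G" "y \<in> carrier G"
  shows "phi K i (u \<otimes> v) y = phi K i u y + phi K i v (inv u \<otimes> y)"
proof -
  have l: "letters_ok n u" "letters_ok n v" "reduced u" using assms carrier_G by auto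
  have "letters_ok n (u @ v)" using l by (auto simp: letters_ok_def)
  then have "phi K i (u \<otimes> v) y = phi K i (u @ v) y"
    using phi_reduce assms by (simp add: mult_G)
  also have "\<dots> = phi K i u y + phi K i v (inv u \<otimes> y)"
    using phi_append l assms by (simp add: fg_reduce_reduced)
  finally show ?thesis .
qed

lemma Kmult_iff: "k \<in> K \<Longrightarrow> y \<in> carrier G \<Longrightarrow> k \<otimes> y \<in> K \<longleftrightarrow> y \<in> K"
proof
  assume k: "k \<in> K" and y: "y \<in> carrier G" and ky: "k \<otimes> y \<in> K"
  have kc: "k \<in> carrier G" using k subset by blast
  have "inv k \<otimes> (k \<otimes> y) \<in> K" using k ky by blast
  then show "y \<in> K" using kc y by (simp add: m_assoc[symmetric])
next
  assume "k \<in> K" "y \<in> K" then show "k \<otimes> y \<in> K" by blast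
qed

lemma phi_Kinv:
  assumes "letters_ok n ws" "y \<in> carrier G" "k \<in> K"
  shows "phi K i ws (k \<otimes> y) = phi K i ws y"
  using assms
proof (induction ws arbitrary: y k)
  case Nil then show ?case by simp
next
  case (Cons x ws)
  have x: "snd x < n" "letters_ok n ws" using Cons.prems by (auto simp: letters_ok_Cons)
  have lc: "[linv x] \<in> carrier G" "[x] \<in> carrier G" using x letter_carrier linv_lt by auto
  have kc: "k \<in> carrier G" using Cons.prems subset by blast
  have k': "[linv x] \<otimes> k \<otimes> inv [linv x] \<in> K" using inv_op_closed2 lc Cons.prems by blast
  have eq: "[linv x] \<otimes> (k \<otimes> y) = ([linv x] \<otimes> k \<otimes> inv [linv x]) \<otimes> ([linv x] \<otimes> y)"
    using lc kc Cons.prems cancel1[of "[linv x]" y] by (simp add: m_assoc)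
  have m1: "phi K i ws ([linv x] \<otimes> (k \<otimes> y)) = phi K i ws ([linv x] \<otimes> y)"
    using Cons.IH[OF x(2) _ k'] eq lc Cons.prems by simp
  have m2: "k \<otimes> y \<in> K \<longleftrightarrow> y \<in> K"
    using Cons.prems Kmult_iff by blast
  have m3: "k \<otimes> y \<otimes> [linv x] \<in> K \<longleftrightarrow> y \<otimes> [linv x] \<in> K"
    using Cons.prems kc lc Kmult_iff[of k "y \<otimes> [linv x]"] by (simp add: m_assoc)
  show ?case by (simp only: phi_Cons m1 m2 m3)
qed

end



lemma sum_ind_pos: "0 < (m::nat) \<Longrightarrow> P 0 \<Longrightarrow> 0 < (\<Sum>l<m. if P l then 1 else (0::int))"
proof -
  assume "0 < m" "P 0"
  then obtain m' where m: "m = Suc m'" by (cases m) auto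
  have "(\<Sum>l<m. if P l then 1 else (0::int)) = (if P 0 then 1 else 0) + (\<Sum>l<m'. if P (Suc l) then 1 else 0)"
    unfolding m by (rule sum.lessThan_Suc_shift)
  moreover have "0 \<le> (\<Sum>l<m'. if P (Suc l) then 1 else (0::int))" by (rule sum_nonneg) auto
  ultimately show ?thesis using \<open>P 0\<close> by simp
qed

lemma sum_ind_zero: "(\<And>l. l < (m::nat) \<Longrightarrow> \<not> P l) \<Longrightarrow> (\<Sum>l<m. if P l then 1 else (0::int)) = 0"
  by (rule sum.neutral) auto

context fgK
begin

lemma phi_one: "phi K i \<one> y = 0"
  by (simp add: one_G)

lemma letters_carrier: "u \<in> carrier G \<Longrightarrow> letters_ok n u"
  by (simp add: carrier_G)

lemma phi_inv:
  assumes "u \<in> carrier G" "y \<in> carrier G"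
  shows "phi K i (inv u) y = - phi K i u (u \<otimes> y)"
proof -
  have "0 = phi K i (inv u \<otimes> u) y" using assms by (simp add: phi_one)
  also have "\<dots> = phi K i (inv u) y + phi K i u (u \<otimes> y)"
    using phi_mult[of "inv u" u y] assms by simp
  finally show ?thesis by simp
qed

lemma phi_Kadd:
  assumes "k1 \<in> K" "k2 \<in> K" "y \<in> carrier G"
  shows "phi K i (k1 \<otimes> k2) y = phi K i k1 y + phi K i k2 y"
proof -
  have c: "k1 \<in> carrier G" "k2 \<in> carrier G" using assms subset by auto
  have "phi K i (k1 \<otimes> k2) y = phi K i k1 y + phi K i k2 (inv k1 \<otimes> y)"
    using phi_mult c assms by blast
  also have "phi K i k2 (inv k1 \<otimes> y) = phi K i k2 y"
    using phi_Kinv[of k2 y "inv k1"] letters_carrier c assms by blast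
  finally show ?thesis .
qed

lemma phi_Kneg:
  assumes "k \<in> K" "y \<in> carrier G"
  shows "phi K i (inv k) y = - phi K i k y"
proof -
  have c: "k \<in> carrier G" using assms subset by auto
  have "phi K i k (k \<otimes> y) = phi K i k y"
    using phi_Kinv letters_carrier c assms by blast
  then show ?thesis using phi_inv c assms by simp
qed

lemma phi_conj:
  assumes "w \<in> carrier G" "k \<in> K" "y \<in> carrier G"
  shows "phi K i (w \<otimes> k \<otimes> inv w) y = phi K i k (inv w \<otimes> y)"
proof -
  have c: "k \<in> carrier G" using assms subset by auto
  have "phi K i (w \<otimes> k \<otimes> inv w) y = phi K i (w \<otimes> k) y + phi K i (inv w) (inv (w \<otimes> k) \<otimes> y)"
    using phi_mult assms c by simp
  also have "phi K i (w \<otimes> k) y = phi K i w y + phi K i k (inv w \<otimes> y)"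
    using phi_mult assms c by simp
  also have "phi K i (inv w) (inv (w \<otimes> k) \<otimes> y) = - phi K i w (w \<otimes> (inv (w \<otimes> k) \<otimes> y))"
    using phi_inv assms c by simp
  also have "w \<otimes> (inv (w \<otimes> k) \<otimes> y) = (w \<otimes> inv k \<otimes> inv w) \<otimes> y"
    using assms c by (simp add: inv_mult_group m_assoc)
  also have "phi K i w ((w \<otimes> inv k \<otimes> inv w) \<otimes> y) = phi K i w y"
    using phi_Kinv letters_carrier assms inv_op_closed2 by simp
  finally show ?thesis by simp
qed

lemma phi_gen:
  "phi K i [(True, j)] y = (if i = j then (if y \<in> K then 1 else 0) else 0)"
  by (simp add: phi_Cons)

lemma phi_pow:
  assumes "j < n" "z \<in> carrier G"
  shows "phi K i ([(True, j)] [^] (m::nat)) z =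
     (if i = j then (\<Sum>l<m. if inv ([(True, j)] [^] l) \<otimes> z \<in> K then 1 else 0) else 0)"
proof (induction m)
  case 0 then show ?case by (simp add: phi_one)
next
  case (Suc m)
  have a: "[(True, j)] \<in> carrier G" using assms letter_carrier by simp
  have am: "[(True, j)] [^] m \<in> carrier G" using a by simp
  have "phi K i ([(True, j)] [^] Suc m) z = phi K i ([(True, j)] [^] m \<otimes> [(True, j)]) z"
    by simp
  also have "\<dots> = phi K i ([(True, j)] [^] m) z + phi K i [(True, j)] (inv ([(True, j)] [^] m) \<otimes> z)"
    by (rule phi_mult[OF am a assms(2)])
  also have "phi K i [(True, j)] (inv ([(True, j)] [^] m) \<otimes> z) =
     (if i = j then (if inv ([(True, j)] [^] m) \<otimes> z \<in> K then 1 else 0) else 0)"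
    by (rule phi_gen)
  finally show ?case unfolding Suc by simp
qed

lemma pow_in_K:
  assumes "finite (rcosets K)" "a \<in> carrier G"
  shows "\<exists>r>0. a [^] (r::nat) \<in> K"
proof -
  let ?f = "\<lambda>m::nat. K #> a [^] m"
  have "?f ` UNIV \<subseteq> rcosets K" using assms unfolding RCOSETS_def by auto
  then have fin: "finite (?f ` UNIV)" using assms finite_subset by blast
  have "\<not> inj ?f"
  proof
    assume "inj ?f"
    then have "finite (UNIV :: nat set)" using finite_imageD[OF fin] by blast
    then show False by simp
  qed
  then obtain p q where pq: "p \<noteq> q" "?f p = ?f q" unfolding inj_def by blast
  have main: "a [^] (q - p) \<in> K" if "p < q" "?f p = ?f q" for p q
  proof -
    have "a [^] q \<in> K #> a [^] q" using rcos_self[of "a [^] q" K] assms subgroup_axioms by simp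
    then have "a [^] q \<in> K #> a [^] p" using that by simp
    then obtain h where h: "h \<in> K" "a [^] q = h \<otimes> a [^] p" unfolding r_coset_def by auto
    have hc: "h \<in> carrier G" using h subset by blast
    have "a [^] q = a [^] (q - p) \<otimes> a [^] p" using that assms by (simp add: nat_pow_mult)
    then have "a [^] (q - p) \<otimes> a [^] p = h \<otimes> a [^] p" using h by simp
    then have "a [^] (q - p) = h" using hc assms r_cancel[of "a [^] p" "a [^] (q - p)" h] by simp
    then show ?thesis using h by simp
  qed
  show ?thesis
  proof (cases "p < q")
    case True then show ?thesis using main pq by (intro exI[of _ "q - p"]) auto
  next
    case False then have "q < p" using pq by simp
    then show ?thesis using main[of q p] pq by (intro exI[of _ "p - q"]) auto
  qed
qed

lemma ex_pow_coset:
  assumes fin: "finite (rcosets K)" and j: "j < n" and g: "g \<in> carrier G" "g \<notin> K"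
    and invar: "\<And>k z. k \<in> K \<Longrightarrow> z \<in> carrier G \<Longrightarrow> phi K j k (g \<otimes> z) = phi K j k z"
  shows "\<exists>s>0. inv ([(True, j)] [^] (s::nat)) \<otimes> g \<in> K"
proof -
  let ?a = "[(True, j)]"
  have a: "?a \<in> carrier G" using j letter_carrier by simp
  obtain r :: nat where r: "r > 0" "?a [^] r \<in> K" using pow_in_K[OF fin a] by blast
  have "phi K j (?a [^] r) (g \<otimes> \<one>) = phi K j (?a [^] r) \<one>" using invar r by simp
  then have eq: "(\<Sum>l<r. if inv (?a [^] l) \<otimes> g \<in> K then 1 else (0::int)) =
        (\<Sum>l<r. if inv (?a [^] l) \<otimes> \<one> \<in> K then 1 else 0)"
    using phi_pow[OF j, of g j r] phi_pow[OF j, of \<one> j r] g by simp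
  have "0 < (\<Sum>l<r. if inv (?a [^] l) \<otimes> \<one> \<in> K then 1 else (0::int))"
    by (rule sum_ind_pos) (use r in auto)
  then obtain l where l: "l < r" "inv (?a [^] l) \<otimes> g \<in> K"
    using eq sum_ind_zero[of r "\<lambda>l. inv (?a [^] l) \<otimes> g \<in> K"] by fastforce
  have "l \<noteq> 0"
  proof
    assume "l = 0"
    then have "inv (?a [^] l) \<otimes> g = g" using g by simp
    then show False using l g by simp
  qed
  then show ?thesis using l by blast
qed

lemma faithful:
  assumes n2: "2 \<le> n" and fin: "finite (rcosets K)" and g: "g \<in> carrier G" "g \<notin> K"
    and invar: "\<And>i k z. i < n \<Longrightarrow> k \<in> K \<Longrightarrow> z \<in> carrier G \<Longrightarrow> phi K i k (g \<otimes> z) = phi K i k z"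
  shows False
proof -
  let ?a = "[(True, 0::nat)]" and ?b = "[(True, 1::nat)]"
  have ab: "?a \<in> carrier G" "?b \<in> carrier G" using n2 letter_carrier by auto
  define P where "P s \<longleftrightarrow> 0 < s \<and> inv (?a [^] (s::nat)) \<otimes> g \<in> K" for s
  have "\<exists>s. P s" using ex_pow_coset[OF fin _ g, of 0] invar n2 unfolding P_def by auto
  define s where "s = (LEAST s. P s)"
  have Ps: "P s" unfolding s_def using \<open>\<exists>s. P s\<close> LeastI_ex by metis
  have notP: "\<not> P l" if "l < s" for l using not_less_Least[of l P] that unfolding s_def by blast
  obtain t where t: "t > 0" "inv (?b [^] (t::nat)) \<otimes> g \<in> K"
    using ex_pow_coset[OF fin _ g, of 1] invar n2 by auto
  have as: "?a [^] s \<in> carrier G" "?b [^] t \<in> carrier G" using ab by auto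
  have sK: "inv (?a [^] s) \<otimes> g \<in> K" using Ps P_def by simp
  have "(inv (?a [^] s) \<otimes> g) \<otimes> inv (inv (?b [^] t) \<otimes> g) \<in> K" using sK t by blast
  also have "(inv (?a [^] s) \<otimes> g) \<otimes> inv (inv (?b [^] t) \<otimes> g) = inv (?a [^] s) \<otimes> ?b [^] t"
    using as g cancel2[of g "?b [^] t"] by (simp add: inv_mult_group m_assoc)
  finally have "inv (inv (?a [^] s) \<otimes> ?b [^] t) \<in> K" by blast
  then have "inv (?b [^] t) \<otimes> ?a [^] s \<in> K" using as by (simp add: inv_mult_group)
  then have kK: "?a [^] s \<otimes> inv (?b [^] t) \<in> K" using comm_iff as by blast
  have phik: "phi K 0 (?a [^] s \<otimes> inv (?b [^] t)) z = (\<Sum>l<s. if inv (?a [^] l) \<otimes> z \<in> K then 1 else 0)"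
    if z: "z \<in> carrier G" for z
  proof -
    have "phi K 0 (?a [^] s \<otimes> inv (?b [^] t)) z = phi K 0 (?a [^] s) z + phi K 0 (inv (?b [^] t)) (inv (?a [^] s) \<otimes> z)"
      using phi_mult as z by simp
    also have "phi K 0 (inv (?b [^] t)) (inv (?a [^] s) \<otimes> z) = - phi K 0 (?b [^] t) (?b [^] t \<otimes> (inv (?a [^] s) \<otimes> z))"
      using phi_inv as z by simp
    also have "phi K 0 (?b [^] t) (?b [^] t \<otimes> (inv (?a [^] s) \<otimes> z)) = 0"
      using phi_pow[of 1 _ 0 t] n2 as z by simp
    finally show ?thesis using phi_pow[of 0 z 0 s] n2 z by simp
  qed
  have "phi K 0 (?a [^] s \<otimes> inv (?b [^] t)) (g \<otimes> \<one>) = phi K 0 (?a [^] s \<otimes> inv (?b [^] t)) \<one>"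
    using invar[OF _ kK] n2 by simp
  then have eq: "(\<Sum>l<s. if inv (?a [^] l) \<otimes> g \<in> K then 1 else (0::int)) =
        (\<Sum>l<s. if inv (?a [^] l) \<otimes> \<one> \<in> K then 1 else 0)"
    using phik g by simp
  have "0 < (\<Sum>l<s. if inv (?a [^] l) \<otimes> \<one> \<in> K then 1 else (0::int))"
    by (rule sum_ind_pos) (use Ps P_def in auto)
  moreover have "(\<Sum>l<s. if inv (?a [^] l) \<otimes> g \<in> K then 1 else (0::int)) = 0"
  proof (rule sum_ind_zero)
    fix l assume "l < s"
    show "\<not> inv (?a [^] l) \<otimes> g \<in> K"
    proof (cases "l = 0")
      case True then show ?thesis using g by simp
    next
      case False then show ?thesis using notP[OF \<open>l < s\<close>] P_def by simp
    qed
  qed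
  ultimately show False using eq by simp
qed

end



context fgK
begin

lemma psi_hom_facts:
  assumes "\<psi> \<in> hom G G"
  shows "group_hom G G \<psi>"
  using assms by (simp add: group_hom_def group_hom_axioms_def is_group)

lemma derived_kill:
  assumes hom: "\<psi> \<in> hom G G" and psiK: "\<psi> ` K \<subseteq> K" and m: "m \<in> derived G K"
  shows "\<psi> m \<in> K \<and> (\<forall>y\<in>carrier G. phi K i (\<psi> m) y = 0)"
proof -
  interpret psi: group_hom G G \<psi> using psi_hom_facts[OF hom] .
  have Kc: "K \<subseteq> carrier G" by (rule subset)
  have dsc: "derived_set G K \<subseteq> carrier G" using derived_set_in_carrier[OF Kc] .
  show ?thesis using m unfolding derived_def
  proof (induction rule: generate.induct)
    case one then show ?case by (simp add: phi_one)
  next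
    case (incl h)
    then obtain a b where ab: "a \<in> K" "b \<in> K" "h = a \<otimes> b \<otimes> inv a \<otimes> inv b" by blast
    have abc: "a \<in> carrier G" "b \<in> carrier G" using ab Kc by auto
    have pab: "\<psi> a \<in> K" "\<psi> b \<in> K" using ab psiK by auto
    have pabc: "\<psi> a \<in> carrier G" "\<psi> b \<in> carrier G" using pab Kc by auto
    have ph: "\<psi> h = \<psi> a \<otimes> \<psi> b \<otimes> inv (\<psi> a) \<otimes> inv (\<psi> b)"
      using ab abc by simp
    have inK: "\<psi> h \<in> K" using ph pab by simp
    have "phi K i (\<psi> h) y = 0" if y: "y \<in> carrier G" for y
    proof -
      have "phi K i (\<psi> h) y = phi K i (\<psi> a \<otimes> \<psi> b \<otimes> inv (\<psi> a)) y + phi K i (inv (\<psi> b)) y"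
        unfolding ph using phi_Kadd pab y by simp
      also have "phi K i (\<psi> a \<otimes> \<psi> b \<otimes> inv (\<psi> a)) y = phi K i (\<psi> a \<otimes> \<psi> b) y + phi K i (inv (\<psi> a)) y"
        using phi_Kadd pab y by simp
      also have "phi K i (\<psi> a \<otimes> \<psi> b) y = phi K i (\<psi> a) y + phi K i (\<psi> b) y"
        using phi_Kadd pab y by simp
      finally show ?thesis using phi_Kneg pab y by simp
    qed
    then show ?case using inK by blast
  next
    case (inv h)
    then have hc: "h \<in> carrier G" using dsc by blast
    obtain a b where ab: "a \<in> K" "b \<in> K" "h = a \<otimes> b \<otimes> inv a \<otimes> inv b" using inv by blast
    have abc: "a \<in> carrier G" "b \<in> carrier G" using ab Kc by auto
    have pab: "\<psi> a \<in> K" "\<psi> b \<in> K" using ab psiK by auto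
    have ph: "\<psi> h = \<psi> a \<otimes> \<psi> b \<otimes> inv (\<psi> a) \<otimes> inv (\<psi> b)"
      using ab abc by simp
    have inK: "\<psi> h \<in> K" using ph pab by simp
    have z: "phi K i (\<psi> h) y = 0" if y: "y \<in> carrier G" for y
    proof -
      have "phi K i (\<psi> h) y = phi K i (\<psi> a \<otimes> \<psi> b \<otimes> inv (\<psi> a)) y + phi K i (inv (\<psi> b)) y"
        unfolding ph using phi_Kadd pab y by simp
      also have "phi K i (\<psi> a \<otimes> \<psi> b \<otimes> inv (\<psi> a)) y = phi K i (\<psi> a \<otimes> \<psi> b) y + phi K i (inv (\<psi> a)) y"
        using phi_Kadd pab y by simp
      also have "phi K i (\<psi> a \<otimes> \<psi> b) y = phi K i (\<psi> a) y + phi K i (\<psi> b) y"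
        using phi_Kadd pab y by simp
      finally show ?thesis using phi_Kneg pab y by simp
    qed
    have "\<psi> (inv h) = inv (\<psi> h)" using hc by simp
    then show ?case using inK z phi_Kneg by simp
  next
    case (eng h1 h2)
    have c: "h1 \<in> carrier G" "h2 \<in> carrier G" using eng.hyps generate_in_carrier[OF dsc] by auto
    have "\<psi> (h1 \<otimes> h2) = \<psi> h1 \<otimes> \<psi> h2" using c by simp
    then show ?case using eng.IH phi_Kadd by simp
  qed
qed

lemma ab_carrier: "abelianization_carrier G K = (\<lambda>d. derived G K #> d) ` K"
  unfolding abelianization_carrier_def FactGroup_def RCOSETS_def r_coset_def by auto

lemma one_derived: "\<one> \<in> derived G K"
  unfolding derived_def by (rule generate.one)

lemma auto_facts:
  assumes "\<psi> \<in> auto G"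
  shows "\<psi> \<in> hom G G" "bij_betw \<psi> (carrier G) (carrier G)"
  using assms by (auto simp: auto_def Bij_def)

lemma rev_dir:
  assumes psi: "\<psi> \<in> auto G" and psiK: "\<psi> ` K = K" and n2: "2 \<le> n"
    and fin: "finite (rcosets K)" and eqv: "homology_equivariant G K \<psi>"
  shows "deck_group_induced_is_id G K \<psi>"
proof -
  have hom: "\<psi> \<in> hom G G" using auto_facts[OF psi] by simp
  interpret psi: group_hom G G \<psi> using psi_hom_facts[OF hom] .
  have Kc: "K \<subseteq> carrier G" by (rule subset)
  have key: "inv w \<otimes> \<psi> w \<in> K" if w: "w \<in> carrier G" for w
  proof (rule ccontr)
    let ?h = "\<psi> w"
    let ?g = "inv w \<otimes> ?h"
    assume ng: "?g \<notin> K"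
    have hc: "?h \<in> carrier G" using w by simp
    have gc: "?g \<in> carrier G" using w hc by simp
    have invar: "phi K i k (?g \<otimes> z) = phi K i k z"
      if i: "i < n" and k: "k \<in> K" and z: "z \<in> carrier G" for i k z
    proof -
      obtain k0 where k0: "k0 \<in> K" "\<psi> k0 = k" using psiK k by (metis imageE)
      have k0c: "k0 \<in> carrier G" "k \<in> carrier G" using k0 k Kc by auto
      let ?D = "derived G K #> k0"
      have D: "?D \<in> abelianization_carrier G K" using ab_carrier k0 by auto
      have "\<one> \<otimes> k0 \<in> ?D" unfolding r_coset_def using one_derived by auto
      then have "k0 \<in> ?D" using k0c by simp
      then have "w \<otimes> k \<otimes> inv w \<in> conj_action G w (homology_induced \<psi> ?D)"
        unfolding conj_action_def homology_induced_def using k0 by auto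
      also have "conj_action G w (homology_induced \<psi> ?D) = homology_induced \<psi> (conj_action G w ?D)"
        using eqv w D unfolding homology_equivariant_def by metis
      finally obtain m where m: "m \<in> derived G K" "w \<otimes> k \<otimes> inv w = \<psi> (w \<otimes> (m \<otimes> k0) \<otimes> inv w)"
        unfolding homology_induced_def conj_action_def r_coset_def by auto
      have mc: "m \<in> carrier G" using m derived_in_carrier[OF Kc] by auto
      have dk: "\<psi> m \<in> K" "\<And>y. y \<in> carrier G \<Longrightarrow> phi K i (\<psi> m) y = 0"
        using derived_kill[OF hom _ m(1), of i] psiK by auto
      have pmc: "\<psi> m \<in> carrier G" using mc by simp
      have e: "\<psi> (w \<otimes> (m \<otimes> k0) \<otimes> inv w) = ?h \<otimes> (\<psi> m \<otimes> k) \<otimes> inv ?h"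
        using w mc k0c k0 by simp
      have yeq: "phi K i k (inv w \<otimes> y) = phi K i k (inv ?h \<otimes> y)" if y: "y \<in> carrier G" for y
      proof -
        have "phi K i k (inv w \<otimes> y) = phi K i (w \<otimes> k \<otimes> inv w) y"
          using phi_conj w k y by simp
        also have "\<dots> = phi K i (?h \<otimes> (\<psi> m \<otimes> k) \<otimes> inv ?h) y" using m e by simp
        also have "\<dots> = phi K i (\<psi> m \<otimes> k) (inv ?h \<otimes> y)"
          using phi_conj hc dk k y by simp
        also have "\<dots> = phi K i (\<psi> m) (inv ?h \<otimes> y) + phi K i k (inv ?h \<otimes> y)"
          using phi_Kadd dk k y hc by simp
        also have "\<dots> = phi K i k (inv ?h \<otimes> y)" using dk y hc by simp
        finally show ?thesis .
      qed
      have "phi K i k (inv w \<otimes> (?h \<otimes> z)) = phi K i k (inv ?h \<otimes> (?h \<otimes> z))"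
        using yeq hc z by simp
      moreover have "inv w \<otimes> (?h \<otimes> z) = ?g \<otimes> z" using w hc z by (simp add: m_assoc)
      moreover have "inv ?h \<otimes> (?h \<otimes> z) = z" using hc z cancel1 by simp
      ultimately show ?thesis by simp
    qed
    show False using faithful[OF n2 fin gc ng] invar by blast
  qed
  show ?thesis unfolding deck_group_induced_is_id_def
  proof
    fix C assume "C \<in> carrier (G Mod K)"
    then obtain w where w: "w \<in> carrier G" "C = K #> w" unfolding FactGroup_def RCOSETS_def by auto
    have hc: "\<psi> w \<in> carrier G" using w by simp
    have g: "inv w \<otimes> \<psi> w \<in> K" using key w by simp
    define k1 where "k1 = w \<otimes> (inv w \<otimes> \<psi> w) \<otimes> inv w"
    have k1: "k1 \<in> K" unfolding k1_def using inv_op_closed2 w g by blast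
    have k1c: "k1 \<in> carrier G" using k1 Kc by auto
    have pw: "\<psi> w = k1 \<otimes> w"
      unfolding k1_def using w hc cancel2[of w "\<psi> w"] by (simp add: m_assoc)
    show "\<psi> ` C = C"
    proof
      show "\<psi> ` C \<subseteq> C"
      proof
        fix x assume "x \<in> \<psi> ` C"
        then obtain k where k: "k \<in> K" "x = \<psi> (k \<otimes> w)" using w unfolding r_coset_def by auto
        have kc: "k \<in> carrier G" using k Kc by auto
        have "x = (\<psi> k \<otimes> k1) \<otimes> w" using k kc w pw k1c by (simp add: m_assoc)
        moreover have "\<psi> k \<otimes> k1 \<in> K" using k psiK k1 by blast
        ultimately show "x \<in> C" using w unfolding r_coset_def by auto
      qed
    next
      show "C \<subseteq> \<psi> ` C"
      proof
        fix x assume "x \<in> C"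
        then obtain k where k: "k \<in> K" "x = k \<otimes> w" using w unfolding r_coset_def by auto
        have kc: "k \<in> carrier G" using k Kc by auto
        have "k \<otimes> inv k1 \<in> K" using k k1 by blast
        then obtain k' where k': "k' \<in> K" "\<psi> k' = k \<otimes> inv k1" using psiK by (metis imageE)
        have k'c: "k' \<in> carrier G" using k' Kc by auto
        have "\<psi> (k' \<otimes> w) = k \<otimes> inv k1 \<otimes> (k1 \<otimes> w)" using k'c w k' pw by simp
        also have "\<dots> = x" using k kc k1c w cancel1[of k1 w] by (simp add: m_assoc)
        finally have "x = \<psi> (k' \<otimes> w)" by simp
        moreover have "k' \<otimes> w \<in> C" using k' w unfolding r_coset_def by auto
        ultimately show "x \<in> \<psi> ` C" by blast
      qed
    qed
  qed
qed

lemma K_normal: "K \<lhd> G"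
  using subgroup_axioms is_group normal_axioms by (simp add: normal_def)

lemma fwd_dir:
  assumes psi: "\<psi> \<in> auto G" and psiK: "\<psi> ` K = K"
    and deck: "deck_group_induced_is_id G K \<psi>"
  shows "homology_equivariant G K \<psi>"
proof -
  have hom: "\<psi> \<in> hom G G" using auto_facts[OF psi] by simp
  interpret psi: group_hom G G \<psi> using psi_hom_facts[OF hom] .
  have Kc: "K \<subseteq> carrier G" by (rule subset)
  let ?N = "derived G K"
  have Nn: "?N \<lhd> G" using derived_is_normal[OF K_normal] .
  interpret Nn: normal ?N G using Nn .
  have Nc: "?N \<subseteq> carrier G" using Nn.subset .
  have psiN: "\<psi> ` ?N = ?N" using psi.derived_img[OF Kc] psiK by simp
  have comm: "a \<otimes> b \<otimes> inv a \<otimes> inv b \<in> ?N" if "a \<in> K" "b \<in> K" for a b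
    unfolding derived_def using that by (intro generate.incl) blast
  have La: "(\<lambda>x. u \<otimes> x \<otimes> inv u) ` (?N #> e) = ?N #> (u \<otimes> e \<otimes> inv u)"
    if u: "u \<in> carrier G" and e: "e \<in> carrier G" for u e
  proof
    show "(\<lambda>x. u \<otimes> x \<otimes> inv u) ` (?N #> e) \<subseteq> ?N #> (u \<otimes> e \<otimes> inv u)"
    proof
      fix y assume "y \<in> (\<lambda>x. u \<otimes> x \<otimes> inv u) ` (?N #> e)"
      then obtain m where m: "m \<in> ?N" "y = u \<otimes> (m \<otimes> e) \<otimes> inv u" unfolding r_coset_def by auto
      have mc: "m \<in> carrier G" using m Nc by auto
      have "y = (u \<otimes> m \<otimes> inv u) \<otimes> (u \<otimes> e \<otimes> inv u)"
        using m mc u e cancel1[of u "e \<otimes> inv u"] by (simp add: m_assoc)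
      moreover have "u \<otimes> m \<otimes> inv u \<in> ?N" using Nn.inv_op_closed2 u m by blast
      ultimately show "y \<in> ?N #> (u \<otimes> e \<otimes> inv u)" unfolding r_coset_def by auto
    qed
  next
    show "?N #> (u \<otimes> e \<otimes> inv u) \<subseteq> (\<lambda>x. u \<otimes> x \<otimes> inv u) ` (?N #> e)"
    proof
      fix y assume "y \<in> ?N #> (u \<otimes> e \<otimes> inv u)"
      then obtain m where m: "m \<in> ?N" "y = m \<otimes> (u \<otimes> e \<otimes> inv u)" unfolding r_coset_def by auto
      have mc: "m \<in> carrier G" using m Nc by auto
      have m': "inv u \<otimes> m \<otimes> u \<in> ?N" using Nn.inv_op_closed1 u m by blast
      have "u \<otimes> ((inv u \<otimes> m \<otimes> u) \<otimes> e) \<otimes> inv u = y"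
        using m mc u e cancel2[of u "m \<otimes> (u \<otimes> (e \<otimes> inv u))"] cancel1[of u "e \<otimes> inv u"] by (simp add: m_assoc)
      moreover have "(inv u \<otimes> m \<otimes> u) \<otimes> e \<in> ?N #> e" using m' unfolding r_coset_def by auto
      ultimately show "y \<in> (\<lambda>x. u \<otimes> x \<otimes> inv u) ` (?N #> e)" by force
    qed
  qed
  have Lb: "?N #> (k \<otimes> f \<otimes> inv k) = ?N #> f" if k: "k \<in> K" and f: "f \<in> K" for k f
  proof -
    have kfc: "k \<in> carrier G" "f \<in> carrier G" using k f Kc by auto
    have "(k \<otimes> f \<otimes> inv k) \<otimes> inv f \<in> ?N" using comm[OF k f] .
    then have "k \<otimes> f \<otimes> inv k \<in> ?N #> f"
      using Nn.rcos_module_rev[OF is_group, of f "k \<otimes> f \<otimes> inv k"] kfc by simp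
    then show ?thesis using repr_independence[of "k \<otimes> f \<otimes> inv k" ?N f] kfc Nn.subgroup_axioms by simp
  qed
  have Lc: "\<psi> ` (?N #> d) = ?N #> \<psi> d" if d: "d \<in> carrier G" for d
  proof -
    have "\<psi> ` (?N #> d) = (\<lambda>m. \<psi> m \<otimes> \<psi> d) ` ?N"
      unfolding r_coset_def using d Nc by (force intro!: image_eqI)
    also have "\<dots> = (\<lambda>m. m \<otimes> \<psi> d) ` (\<psi> ` ?N)" by (simp add: image_image)
    also have "\<dots> = ?N #> \<psi> d" unfolding psiN r_coset_def by auto
    finally show ?thesis .
  qed
  show ?thesis unfolding homology_equivariant_def
  proof (intro ballI)
    fix w D assume w: "w \<in> carrier G" and D: "D \<in> abelianization_carrier G K"
    then obtain d where d: "d \<in> K" "D = ?N #> d" using ab_carrier by auto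
    have dc: "d \<in> carrier G" using d Kc by auto
    have hc: "\<psi> w \<in> carrier G" using w by simp
    have "K #> w \<in> carrier (G Mod K)" using w unfolding FactGroup_def RCOSETS_def by auto
    then have "\<psi> ` (K #> w) = K #> w" using deck unfolding deck_group_induced_is_id_def by blast
    moreover have "w \<in> K #> w" using rcos_self[OF w subgroup_axioms] .
    ultimately have "\<psi> w \<in> K #> w" by blast
    then obtain k1 where k1: "k1 \<in> K" "\<psi> w = k1 \<otimes> w" unfolding r_coset_def by auto
    have k1c: "k1 \<in> carrier G" using k1 Kc by auto
    have pd: "\<psi> d \<in> K" using psiK d by blast
    have pdc: "\<psi> d \<in> carrier G" using pd Kc by auto
    have fK: "w \<otimes> \<psi> d \<otimes> inv w \<in> K" using inv_op_closed2 w pd by blast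
    have fc: "w \<otimes> \<psi> d \<otimes> inv w \<in> carrier G" using fK Kc by auto
    have "homology_induced \<psi> (conj_action G w D) = \<psi> ` (?N #> (w \<otimes> d \<otimes> inv w))"
      unfolding homology_induced_def conj_action_def d(2) using La[OF w dc] by simp
    also have "\<dots> = ?N #> \<psi> (w \<otimes> d \<otimes> inv w)" using Lc w dc by simp
    also have "\<psi> (w \<otimes> d \<otimes> inv w) = k1 \<otimes> (w \<otimes> \<psi> d \<otimes> inv w) \<otimes> inv k1"
      using w dc k1 k1c pdc by (simp add: m_assoc inv_mult_group)
    also have "?N #> (k1 \<otimes> (w \<otimes> \<psi> d \<otimes> inv w) \<otimes> inv k1) = ?N #> (w \<otimes> \<psi> d \<otimes> inv w)"
      using Lb k1 fK by blast
    also have "\<dots> = conj_action G w (homology_induced \<psi> D)"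
      unfolding homology_induced_def conj_action_def d(2) using La[OF w pdc] Lc dc by simp
    finally show "homology_induced \<psi> (conj_action G w D) = conj_action G w (homology_induced \<psi> D)" .
  qed
qed

end



theorem lemma3p2:
  fixes n :: nat and \<psi> :: "fg_word \<Rightarrow> fg_word" and K :: "fg_word set"
  assumes "n \<ge> 2"
    and "\<psi> \<in> auto (free_group n)"
    and "characteristic (free_group n) K"
    and "finite (rcosets\<^bsub>free_group n\<^esub> K)"
  shows "deck_group_induced_is_id (free_group n) K \<psi> \<longleftrightarrow> homology_equivariant (free_group n) K \<psi>"
proof -
  let ?G = "free_group n"
  interpret G: group ?G by (rule group_fg)
  have sub: "subgroup K ?G" and ch: "\<And>\<phi>. \<phi> \<in> auto ?G \<Longrightarrow> \<phi> ` K = K"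
    using assms(3) unfolding characteristic_def by auto
  have conjK: "g \<otimes>\<^bsub>?G\<^esub> h \<otimes>\<^bsub>?G\<^esub> inv\<^bsub>?G\<^esub> g \<in> K" if g: "g \<in> carrier ?G" and h: "h \<in> K" for g h
  proof -
    let ?c = "\<lambda>x\<in>carrier ?G. g \<otimes>\<^bsub>?G\<^esub> x \<otimes>\<^bsub>?G\<^esub> inv\<^bsub>?G\<^esub> g"
    have hom: "?c \<in> hom ?G ?G"
    proof (rule homI)
      fix x assume "x \<in> carrier ?G" then show "?c x \<in> carrier ?G" using g by simp
    next
      fix x y assume xy: "x \<in> carrier ?G" "y \<in> carrier ?G"
      have "g \<otimes>\<^bsub>?G\<^esub> (x \<otimes>\<^bsub>?G\<^esub> y) \<otimes>\<^bsub>?G\<^esub> inv\<^bsub>?G\<^esub> g =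
            (g \<otimes>\<^bsub>?G\<^esub> x \<otimes>\<^bsub>?G\<^esub> inv\<^bsub>?G\<^esub> g) \<otimes>\<^bsub>?G\<^esub> (g \<otimes>\<^bsub>?G\<^esub> y \<otimes>\<^bsub>?G\<^esub> inv\<^bsub>?G\<^esub> g)"
      proof -
        have "inv\<^bsub>?G\<^esub> g \<otimes>\<^bsub>?G\<^esub> (g \<otimes>\<^bsub>?G\<^esub> (y \<otimes>\<^bsub>?G\<^esub> inv\<^bsub>?G\<^esub> g)) = y \<otimes>\<^bsub>?G\<^esub> inv\<^bsub>?G\<^esub> g"
          using g xy by (simp add: G.m_assoc[symmetric])
        then show ?thesis using g xy by (simp add: G.m_assoc)
      qed
      then show "?c (x \<otimes>\<^bsub>?G\<^esub> y) = ?c x \<otimes>\<^bsub>?G\<^esub> ?c y" using xy g by simp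
    qed
    have "?c \<in> Bij (carrier ?G)"
      unfolding Bij_def using G.conjugation_is_bij[OF g] by simp
    then have "?c \<in> auto ?G" using hom unfolding auto_def by simp
    then have "?c ` K = K" using ch by blast
    moreover have "h \<in> carrier ?G" using h sub subgroup.subset by blast
    ultimately show ?thesis using h by force
  qed
  have Kn: "K \<lhd> ?G" using G.normal_inv_iff sub conjK by blast
  interpret F: fgK K ?G n
    unfolding fgK_def fgK_axioms_def using Kn by simp
  have psiK: "\<psi> ` K = K" using ch assms(2) by blast
  show ?thesis
    using F.rev_dir[OF assms(2) psiK assms(1) assms(4)] F.fwd_dir[OF assms(2) psiK] by blast
qed


end
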